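(* Let $\mathcal{V}=[0,1]_\oplus$, let $X$ be a set, and let $T$ be either the powerset monad $\mathcal{P}$ with evaluation map $\mathit{ev}_T=\sup$ (with $\sup\emptyset=0$), or the countably supported distribution monad $\mathcal{D}$ with evaluation map $\mathit{ev}_T=\mathbb{E}$ (expected value, $\mathbb{E}(p)=\sum_v v\cdot p(v)$). Let $F$ be a functor and $(TX,\mu_X,c)$ an $F$-$T$-bialgebra for some natural transformation $\zeta\colon TF\Rightarrow FT$, where $\mu$ is the multiplication of $T$. Let $u$ be the up-to function on maps $d\colon TX\times TX\to[0,1]$ given by $u(d)(y_1,y_2)=\inf\{K_{\{\mathit{ev}_T\}}(d)(t_1,t_2)\mid t_1,t_2\in TTX,\ \mu_X(t_1)=y_1,\ \mu_X(t_2)=y_2\}$. Then for every $d\colon TX\times TX\to[0,1]$: (i) if $T=\mathcal{P}$: $u(d)\big(\bigcup_{i\in I}X_i,\bigcup_{i\in I}Y_i\big)\le\sup_{i\in I}d(X_i,Y_i)$ for every family $(X_i,Y_i)_{i\in I}$ of pairs of subsets of $X$; (ii) if $T=\mathcal{D}$: $u(d)\big(\sum_{i\in I}r_i\cdot p_i,\sum_{i\in I}r_i\cdot q_i\big)\le\sum_{i\in I}r_i\cdot d(p_i,q_i)$ for every countable family of $r_i\in[0,1]$ with $\sum_{i\in I}r_i=1$ and $p_i,q_i\in\mathcal{D}(X)$. (Here $\le$ and $\inf$, $\sup$ refer to the usual order on the reals.)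
   Context: $[0,1]_\oplus$ is the quantale on $[0,1]$ with reversed order ($a\sqsubseteq b$ iff $a\ge b$) and truncated addition $a\oplus b=\min(a+b,1)$; its residuation is $d_{\mathcal{V}}(a,b)=\max(b-a,0)$, and quantale joins are real infima. For a map $d\colon Y\times Y\to[0,1]$, $\gamma_Y(d)=\{p\colon Y\to[0,1]\mid d_{\mathcal{V}}(p(y_1),p(y_2))\le d(y_1,y_2)\ \forall y_1,y_2\}$, and $K_{\{\mathit{ev}_T\}}(d)(t_1,t_2)=\sup_{p\in\gamma_Y(d)}d_{\mathcal{V}}(\mathit{ev}_T(Tp(t_1)),\mathit{ev}_T(Tp(t_2)))$ for $t_1,t_2\in TY$. $\mathcal{D}(X)$ is the set of probability distributions on $X$ with countable support, with $\mathcal{D}f(p)(y)=\sum_{f(x)=y}p(x)$, unit the Dirac distributions and multiplication $\mu(P)(x)=\sum_\nu P(\nu)\nu(x)$. An $F$-$T$-bialgebra for $\zeta$ is a triple $(Y,a,c)$ with $a\colon TY\to Y$, $c\colon Y\to FY$ and $c\circ a=Fa\circ\zeta_Y\circ Tc$. *)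

theory Defs
  imports "HOL-Probability.Probability"
begin

text \<open>Residuation of the quantale [0,1] with truncated addition (directed).\<close>
definition dV :: "real \<Rightarrow> real \<Rightarrow> real" where
  "dV a b = max (b - a) 0"

definition gammaY :: "('y \<Rightarrow> 'y \<Rightarrow> real) \<Rightarrow> ('y \<Rightarrow> real) set" where
  "gammaY d = {p. (\<forall>y. 0 \<le> p y \<and> p y \<le> 1) \<and> (\<forall>y1 y2. dV (p y1) (p y2) \<le> d y1 y2)}"

text \<open>Kantorovich lifting; evTp p t stands for ev_T (T p t).\<close>
definition Kant :: "(('y \<Rightarrow> real) \<Rightarrow> 't \<Rightarrow> real) \<Rightarrow> ('y \<Rightarrow> 'y \<Rightarrow> real) \<Rightarrow> 't \<Rightarrow> 't \<Rightarrow> real" where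
  "Kant evTp d t1 t2 = (SUP p\<in>gammaY d. dV (evTp p t1) (evTp p t2))"

definition supP :: "real set \<Rightarrow> real" where
  "supP S = (if S = {} then 0 else Sup S)"

definition evP :: "('y \<Rightarrow> real) \<Rightarrow> 'y set \<Rightarrow> real" where
  "evP p t = supP (p ` t)"

definition expect :: "real pmf \<Rightarrow> real" where
  "expect q = measure_pmf.expectation q (\<lambda>v. v)"

definition evD :: "('y \<Rightarrow> real) \<Rightarrow> 'y pmf \<Rightarrow> real" where
  "evD p t = expect (map_pmf p t)"

definition upto :: "('t \<Rightarrow> 'y) \<Rightarrow> (('y \<Rightarrow> real) \<Rightarrow> 't \<Rightarrow> real) \<Rightarrow> ('y \<Rightarrow> 'y \<Rightarrow> real) \<Rightarrow> 'y \<Rightarrow> 'y \<Rightarrow> real" where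
  "upto mu evTp d y1 y2 = (INF t\<in>{(t1, t2). mu t1 = y1 \<and> mu t2 = y2}. Kant evTp d (fst t) (snd t))"

end

theory Submission imports Defs begin

lemma gamma0: "(\<forall>a b. 0 \<le> d a b) \<Longrightarrow> (\<lambda>_. 0) \<in> gammaY d"
  by (auto simp: gammaY_def dV_def)

lemma Kant_nonneg:
  assumes d: "\<forall>a b. 0 \<le> d a b" and E: "\<And>p t. p \<in> gammaY d \<Longrightarrow> 0 \<le> E p t \<and> E p t \<le> 1"
  shows "0 \<le> Kant E d t1 t2"
proof -
  have bdd: "bdd_above ((\<lambda>p. dV (E p t1) (E p t2)) ` gammaY d)"
  proof (intro bdd_aboveI[where M=1])
    fix x assume "x \<in> (\<lambda>p. dV (E p t1) (E p t2)) ` gammaY d"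
    then obtain p where "p \<in> gammaY d" "x = dV (E p t1) (E p t2)" by auto
    then show "x \<le> 1" using E[of p t1] E[of p t2] by (auto simp: dV_def)
  qed
  have "0 \<le> dV (E (\<lambda>_. 0) t1) (E (\<lambda>_. 0) t2)" by (simp add: dV_def)
  also have "\<dots> \<le> Kant E d t1 t2" unfolding Kant_def
    by (rule cSUP_upper[OF gamma0[OF d] bdd])
  finally show ?thesis .
qed

lemma Kant_le:
  assumes d: "\<forall>a b. 0 \<le> d a b" and "\<And>p. p \<in> gammaY d \<Longrightarrow> dV (E p t1) (E p t2) \<le> c"
  shows "Kant E d t1 t2 \<le> c"
  unfolding Kant_def using gamma0[OF d] assms(2) by (intro cSUP_least) auto

lemma upto_le:
  assumes d: "\<forall>a b. 0 \<le> d a b" and E: "\<And>p t. p \<in> gammaY d \<Longrightarrow> 0 \<le> E p t \<and> E p t \<le> 1"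
   and "mu t1 = y1" "mu t2 = y2"
  shows "upto mu E d y1 y2 \<le> Kant E d t1 t2"
proof -
  have "bdd_below ((\<lambda>t. Kant E d (fst t) (snd t)) ` {(t1, t2). mu t1 = y1 \<and> mu t2 = y2})"
    using Kant_nonneg[OF d E] by (intro bdd_belowI[where m=0]) auto
  then show ?thesis unfolding upto_def
    using cINF_lower[of "\<lambda>t. Kant E d (fst t) (snd t)" _ "(t1,t2)"] assms(3,4) by auto
qed

lemma evP_bound: "p \<in> gammaY d \<Longrightarrow> 0 \<le> evP p t \<and> evP p t \<le> 1"
proof -
  assume "p \<in> gammaY d"
  then have b: "\<And>y. 0 \<le> p y \<and> p y \<le> 1" by (auto simp: gammaY_def)
  show ?thesis
  proof (cases "t = {}")
    case True then show ?thesis by (simp add: evP_def supP_def)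
  next
    case False
    then obtain y where y: "y \<in> t" by auto
    have bdd: "bdd_above (p ` t)" using b by (intro bdd_aboveI[where M=1]) auto
    have "0 \<le> p y" using b by auto
    also have "p y \<le> Sup (p ` t)" using bdd y by (intro cSup_upper) auto
    finally have "0 \<le> Sup (p ` t)" .
    moreover have "Sup (p ` t) \<le> 1" using False b by (intro cSup_least) auto
    ultimately show ?thesis using False by (simp add: evP_def supP_def)
  qed
qed

lemma evD_bound: "p \<in> gammaY d \<Longrightarrow> 0 \<le> evD p t \<and> evD p t \<le> 1"
proof -
  assume "p \<in> gammaY d"
  then have b: "\<And>y. 0 \<le> p y \<and> p y \<le> 1" by (auto simp: gammaY_def)
  have int: "integrable (measure_pmf t) p"
    using b by (intro measure_pmf.integrable_const_bound[where B=1]) auto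
  have "evD p t = measure_pmf.expectation t p" by (simp add: evD_def expect_def)
  moreover have "0 \<le> measure_pmf.expectation t p" using b by (intro integral_nonneg_AE) auto
  moreover have "measure_pmf.expectation t p \<le> 1" using b int
    by (intro measure_pmf.integral_le_const) auto
  ultimately show ?thesis by simp
qed
lemma partI:
  fixes d :: "'a set \<Rightarrow> 'a set \<Rightarrow> real" and I :: "'i set"
  assumes d: "\<forall>a b. 0 \<le> d a b \<and> d a b \<le> 1"
  shows "upto Union evP d (\<Union>i\<in>I. Xs i) (\<Union>i\<in>I. Ys i) \<le> supP ((\<lambda>i. d (Xs i) (Ys i)) ` I)"
proof -
  have d0: "\<forall>a b. 0 \<le> d a b" using d by auto
  have "upto Union evP d (\<Union>i\<in>I. Xs i) (\<Union>i\<in>I. Ys i) \<le> Kant evP d (Xs ` I) (Ys ` I)"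
    by (rule upto_le[OF d0 evP_bound]) auto
  also have "\<dots> \<le> supP ((\<lambda>i. d (Xs i) (Ys i)) ` I)"
  proof (rule Kant_le[OF d0])
    fix p assume p: "p \<in> gammaY d"
    then have b: "\<And>y. 0 \<le> p y \<and> p y \<le> 1" and nx: "\<And>y1 y2. dV (p y1) (p y2) \<le> d y1 y2"
      by (auto simp: gammaY_def)
    show "dV (evP p (Xs ` I)) (evP p (Ys ` I)) \<le> supP ((\<lambda>i. d (Xs i) (Ys i)) ` I)"
    proof (cases "I = {}")
      case True then show ?thesis by (simp add: evP_def supP_def dV_def)
    next
      case False
      then obtain i0 where i0: "i0 \<in> I" by auto
      define S where "S = Sup ((\<lambda>i. d (Xs i) (Ys i)) ` I)"
      define A where "A = Sup ((\<lambda>i. p (Xs i)) ` I)"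
      define B where "B = Sup ((\<lambda>i. p (Ys i)) ` I)"
      have bddS: "bdd_above ((\<lambda>i. d (Xs i) (Ys i)) ` I)" using d by (intro bdd_aboveI[where M=1]) auto
      have bddA: "bdd_above ((\<lambda>i. p (Xs i)) ` I)" using b by (intro bdd_aboveI[where M=1]) auto
      have Si: "d (Xs i) (Ys i) \<le> S" if "i \<in> I" for i
        unfolding S_def using bddS that by (intro cSup_upper) auto
      have Ai: "p (Xs i) \<le> A" if "i \<in> I" for i
        unfolding A_def using bddA that by (intro cSup_upper) auto
      have S0: "0 \<le> S" using Si[OF i0] d by (meson order_trans)
      have "B \<le> A + S" unfolding B_def
      proof (rule cSup_least)
        show "(\<lambda>i. p (Ys i)) ` I \<noteq> {}" using False by auto
      next
        fix x assume "x \<in> (\<lambda>i. p (Ys i)) ` I"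
        then obtain i where i: "i \<in> I" "x = p (Ys i)" by auto
        have "p (Ys i) - p (Xs i) \<le> d (Xs i) (Ys i)" using nx[of "Xs i" "Ys i"] by (simp add: dV_def)
        then show "x \<le> A + S" using i Si[OF i(1)] Ai[OF i(1)] by linarith
      qed
      moreover have "evP p (Xs ` I) = A" "evP p (Ys ` I) = B"
        using False by (simp_all add: evP_def supP_def A_def B_def image_image)
      moreover have "supP ((\<lambda>i. d (Xs i) (Ys i)) ` I) = S" using False by (simp add: supP_def S_def)
      ultimately show ?thesis using S0 by (simp add: dV_def)
    qed
  qed
  finally show ?thesis .
qed

lemma partII:
  fixes d :: "'a pmf \<Rightarrow> 'a pmf \<Rightarrow> real" and I :: "'j set"
  assumes d: "\<forall>a b. 0 \<le> d a b \<and> d a b \<le> 1" and r: "\<forall>i\<in>I. 0 \<le> r i \<and> r i \<le> 1"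
    and hs: "(r has_sum 1) I"
    and PP: "\<forall>x. pmf P x = (\<Sum>\<^sub>\<infinity>i\<in>I. r i * pmf (p i) x)"
    and QQ: "\<forall>x. pmf Q x = (\<Sum>\<^sub>\<infinity>i\<in>I. r i * pmf (q i) x)"
  shows "upto join_pmf evD d P Q \<le> (\<Sum>\<^sub>\<infinity>i\<in>I. r i * d (p i) (q i))"
proof -
  have d0: "\<forall>a b. 0 \<le> d a b" using d by auto
  define f where "f i = (if i \<in> I then r i else 0)" for i
  have f0: "0 \<le> f i" for i using r by (auto simp: f_def)
  have fhs: "(f has_sum 1) UNIV"
    using hs by (rule has_sum_cong_neutral[THEN iffD1, rotated -1]) (auto simp: f_def)
  have fsum: "f summable_on UNIV" using fhs summable_on_def by blast
  have fabs: "Infinite_Set_Sum.abs_summable_on f UNIV"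
    using fsum abs_summable_equivalent summable_on_iff_abs_summable_on_real by blast
  have "infsetsum f UNIV = 1"
    using infsetsum_infsum[OF fabs] infsumI[OF fhs] by simp
  then have "(\<integral>\<^sup>+x. ennreal (f x) \<partial>count_space UNIV) = 1"
    using nn_integral_conv_infsetsum[OF fabs] f0 by simp
  define R where "R = embed_pmf f"
  have pR: "pmf R i = f i" for i unfolding R_def
    by (rule pmf_embed_pmf) (use f0 \<open>(\<integral>\<^sup>+x. ennreal (f x) \<partial>count_space UNIV) = 1\<close> in auto)
  have L: "measure_pmf.expectation R h = (\<Sum>\<^sub>\<infinity>i\<in>I. r i * h i) \<and> (\<lambda>i. r i * h i) summable_on I"
    if hb: "\<And>i. \<bar>h i\<bar> \<le> B" for h :: "'j \<Rightarrow> real" and B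
  proof -
    have "(\<lambda>i. B * f i) summable_on UNIV" by (rule summable_on_cmult_right[OF fsum])
    then have n1: "(\<lambda>i. norm (f i * h i)) summable_on UNIV"
      by (rule summable_on_comparison_test)
         (use hb f0 in \<open>auto simp: abs_mult mult.commute[of B] intro: mult_left_mono\<close>)
    then have s1: "(\<lambda>i. f i * h i) summable_on UNIV"
      using summable_on_iff_abs_summable_on_real by blast
    then have a1: "Infinite_Set_Sum.abs_summable_on (\<lambda>i. pmf R i * h i) UNIV"
      using abs_summable_equivalent[of "\<lambda>i. f i * h i" UNIV] n1 pR by simp
    have "measure_pmf.expectation R h = infsetsum (\<lambda>i. pmf R i * h i) UNIV"
      by (rule pmf_expectation_eq_infsetsum)
    also have "\<dots> = (\<Sum>\<^sub>\<infinity>i. f i * h i)" using infsetsum_infsum[OF a1] pR by simp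
    also have "\<dots> = (\<Sum>\<^sub>\<infinity>i\<in>I. r i * h i)"
      by (rule infsum_cong_neutral) (auto simp: f_def)
    finally show ?thesis
      using s1 summable_on_cong_neutral[of UNIV I "\<lambda>i. f i * h i" "\<lambda>i. r i * h i"]
      by (auto simp: f_def)
  qed
  have PR: "P = join_pmf (map_pmf p R)"
  proof (rule pmf_eqI)
    fix x
    have "pmf (join_pmf (map_pmf p R)) x = measure_pmf.expectation R (\<lambda>i. pmf (p i) x)"
      by (simp add: bind_eq_join_pmf[symmetric] pmf_bind)
    also have "\<dots> = pmf P x" using L[of "\<lambda>i. pmf (p i) x" 1] PP by (simp add: pmf_le_1)
    finally show "pmf P x = pmf (join_pmf (map_pmf p R)) x" by simp
  qed
  have QR: "Q = join_pmf (map_pmf q R)"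
  proof (rule pmf_eqI)
    fix x
    have "pmf (join_pmf (map_pmf q R)) x = measure_pmf.expectation R (\<lambda>i. pmf (q i) x)"
      by (simp add: bind_eq_join_pmf[symmetric] pmf_bind)
    also have "\<dots> = pmf Q x" using L[of "\<lambda>i. pmf (q i) x" 1] QQ by (simp add: pmf_le_1)
    finally show "pmf Q x = pmf (join_pmf (map_pmf q R)) x" by simp
  qed
  have "upto join_pmf evD d P Q \<le> Kant evD d (map_pmf p R) (map_pmf q R)"
    by (rule upto_le[OF d0 evD_bound]) (auto simp: PR QR)
  also have "\<dots> \<le> (\<Sum>\<^sub>\<infinity>i\<in>I. r i * d (p i) (q i))"
  proof (rule Kant_le[OF d0])
    fix g assume g: "g \<in> gammaY d"
    then have b: "\<And>y. 0 \<le> g y \<and> g y \<le> 1" and nx: "\<And>y1 y2. dV (g y1) (g y2) \<le> d y1 y2"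
      by (auto simp: gammaY_def)
    have ep: "evD g (map_pmf p R) = measure_pmf.expectation R (\<lambda>i. g (p i))"
      by (simp add: evD_def expect_def)
    have eq: "evD g (map_pmf q R) = measure_pmf.expectation R (\<lambda>i. g (q i))"
      by (simp add: evD_def expect_def)
    have Lp: "measure_pmf.expectation R (\<lambda>i. g (p i)) = (\<Sum>\<^sub>\<infinity>i\<in>I. r i * g (p i))"
         "(\<lambda>i. r i * g (p i)) summable_on I"
      using L[of "\<lambda>i. g (p i)" 1] b by (auto simp: abs_le_iff)
    have Lq: "measure_pmf.expectation R (\<lambda>i. g (q i)) = (\<Sum>\<^sub>\<infinity>i\<in>I. r i * g (q i))"
         "(\<lambda>i. r i * g (q i)) summable_on I"
      using L[of "\<lambda>i. g (q i)" 1] b by (auto simp: abs_le_iff)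
    have Ld: "(\<lambda>i. r i * d (p i) (q i)) summable_on I"
      using L[of "\<lambda>i. d (p i) (q i)" 1] d by (auto simp: abs_le_iff)
    have "(\<Sum>\<^sub>\<infinity>i\<in>I. r i * g (q i)) \<le> (\<Sum>\<^sub>\<infinity>i\<in>I. r i * g (p i) + r i * d (p i) (q i))"
    proof (rule infsum_mono)
      show "(\<lambda>i. r i * g (p i) + r i * d (p i) (q i)) summable_on I"
        by (rule summable_on_add[OF Lp(2) Ld])
    next
      fix i assume i: "i \<in> I"
      have "g (q i) \<le> g (p i) + d (p i) (q i)" using nx[of "p i" "q i"] by (simp add: dV_def)
      then have "r i * g (q i) \<le> r i * (g (p i) + d (p i) (q i))"
        using r i by (intro mult_left_mono) auto
      then show "r i * g (q i) \<le> r i * g (p i) + r i * d (p i) (q i)" by (simp add: algebra_simps)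
    qed (rule Lq(2))
    also have "\<dots> = (\<Sum>\<^sub>\<infinity>i\<in>I. r i * g (p i)) + (\<Sum>\<^sub>\<infinity>i\<in>I. r i * d (p i) (q i))"
      by (rule infsum_add[OF Lp(2) Ld])
    finally have 1: "(\<Sum>\<^sub>\<infinity>i\<in>I. r i * g (q i)) - (\<Sum>\<^sub>\<infinity>i\<in>I. r i * g (p i))
        \<le> (\<Sum>\<^sub>\<infinity>i\<in>I. r i * d (p i) (q i))" by simp
    have 2: "0 \<le> (\<Sum>\<^sub>\<infinity>i\<in>I. r i * d (p i) (q i))"
      using r d by (intro infsum_nonneg) auto
    show "dV (evD g (map_pmf p R)) (evD g (map_pmf q R)) \<le> (\<Sum>\<^sub>\<infinity>i\<in>I. r i * d (p i) (q i))"
      unfolding ep eq Lp(1) Lq(1) dV_def using 1 2 by simp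
  qed
  finally show ?thesis .
qed

theorem mainTheorem15:
  shows "(\<forall>(d :: 'a set \<Rightarrow> 'a set \<Rightarrow> real) (I :: 'i set) (Xs :: 'i \<Rightarrow> 'a set) (Ys :: 'i \<Rightarrow> 'a set).
            (\<forall>a b. 0 \<le> d a b \<and> d a b \<le> 1) \<longrightarrow>
            upto Union evP d (\<Union>i\<in>I. Xs i) (\<Union>i\<in>I. Ys i) \<le> supP ((\<lambda>i. d (Xs i) (Ys i)) ` I))
       \<and> (\<forall>(d :: 'a pmf \<Rightarrow> 'a pmf \<Rightarrow> real) (I :: 'j set) (r :: 'j \<Rightarrow> real)
            (p :: 'j \<Rightarrow> 'a pmf) (q :: 'j \<Rightarrow> 'a pmf) (P :: 'a pmf) (Q :: 'a pmf).
            (\<forall>a b. 0 \<le> d a b \<and> d a b \<le> 1) \<longrightarrow> countable I \<longrightarrow>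
            (\<forall>i\<in>I. 0 \<le> r i \<and> r i \<le> 1) \<longrightarrow> (r has_sum 1) I \<longrightarrow>
            (\<forall>x. pmf P x = (\<Sum>\<^sub>\<infinity>i\<in>I. r i * pmf (p i) x)) \<longrightarrow>
            (\<forall>x. pmf Q x = (\<Sum>\<^sub>\<infinity>i\<in>I. r i * pmf (q i) x)) \<longrightarrow>
            upto join_pmf evD d P Q \<le> (\<Sum>\<^sub>\<infinity>i\<in>I. r i * d (p i) (q i)))"
  by (intro conjI allI impI, rule partI, assumption, rule partII; assumption)
end
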